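(* For real $\alpha\ne0$ and real $\beta$, let $F_{\alpha,\beta}(x)=\bigl(1+\frac{\alpha}{x}\bigr)^{x+\beta}$. Then: (1) For $\alpha>0$: $\bigl(1+\frac{\alpha}{x}\bigr)^{x+\beta}-e^{\alpha}\in\mathcal{C}[(0,\infty)]$ if and only if $\alpha\le2\beta$; and $\bigl(1+\frac{\alpha}{x}\bigr)^{-(x+\beta)}-e^{-\alpha}\in\mathcal{C}[(0,\infty)]$ if and only if $\beta\le0$. (2) For $\alpha<0$: $\bigl(1+\frac{\alpha}{x}\bigr)^{x+\beta}-e^{\alpha}\in\mathcal{C}[(-\alpha,\infty)]$ if and only if $\beta\le\alpha$; and $\frac{1}{F_{\alpha,\beta}(x)}\in\mathcal{C}[(-\alpha,\infty)]$ if and only if $2\beta\ge\alpha$.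
   Context: A function $f$ is completely monotonic on an interval $I$ if it has derivatives of all orders on $I$ and $(-1)^k f^{(k)}(x)\ge0$ for all $x\in I$ and all integers $k\ge0$; the set of such functions is denoted $\mathcal{C}[I]$. *)

theory Defs
  imports Complex_Main
begin

definition completely_monotonic_on :: "(real \<Rightarrow> real) \<Rightarrow> real set \<Rightarrow> bool" where
  "completely_monotonic_on f I \<longleftrightarrow>
     (\<exists>D :: nat \<Rightarrow> real \<Rightarrow> real.
        (\<forall>x\<in>I. D 0 x = f x) \<and>
        (\<forall>k. \<forall>x\<in>I. (D k has_real_derivative D (Suc k) x) (at x)) \<and>
        (\<forall>k. \<forall>x\<in>I. (-1) ^ k * D k x \<ge> 0))"

definition F_ab :: "real \<Rightarrow> real \<Rightarrow> real \<Rightarrow> real" where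
  "F_ab \<alpha> \<beta> x = (1 + \<alpha> / x) powr (x + \<beta>)"

end

theory Submission
  imports Defs "HOL-Real_Asymp.Real_Asymp"
begin


definition leib :: "(nat \<Rightarrow> real \<Rightarrow> real) \<Rightarrow> (nat \<Rightarrow> real \<Rightarrow> real) \<Rightarrow> nat \<Rightarrow> real \<Rightarrow> real" where
  "leib A B n x = (\<Sum>j\<le>n. real (n choose j) * A j x * B (n - j) x)"

lemma leib_Suc:
  "leib A B (Suc n) x = (\<Sum>j\<le>n. real (n choose j) * (A (Suc j) x * B (n - j) x + A j x * B (Suc (n - j)) x))"
proof -
  have h1: "leib A B (Suc n) x = A 0 x * B (Suc n) x + (\<Sum>k\<le>n. real (Suc n choose Suc k) * A (Suc k) x * B (n - k) x)"
    unfolding leib_def sum.atMost_Suc_shift by simp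
  have h2: "(\<Sum>k\<le>n. real (Suc n choose Suc k) * A (Suc k) x * B (n - k) x) =
      (\<Sum>k\<le>n. real (n choose k) * A (Suc k) x * B (n - k) x)
      + (\<Sum>k\<le>n. real (n choose Suc k) * A (Suc k) x * B (n - k) x)"
    by (simp add: sum.distrib algebra_simps)
  have h3: "(\<Sum>k\<le>n. real (n choose Suc k) * A (Suc k) x * B (n - k) x)
        = (\<Sum>k<n. real (n choose Suc k) * A (Suc k) x * B (Suc (n - Suc k)) x)"
    by (simp add: lessThan_Suc_atMost[symmetric] Suc_diff_Suc)
  have h4: "(\<Sum>j\<le>n. real (n choose j) * A j x * B (Suc (n - j)) x)
       = A 0 x * B (Suc n) x + (\<Sum>k<n. real (n choose Suc k) * A (Suc k) x * B (Suc (n - Suc k)) x)"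
    by (simp add: sum.atMost_shift)
  have h5: "(\<Sum>j\<le>n. real (n choose j) * (A (Suc j) x * B (n - j) x + A j x * B (Suc (n - j)) x))
     = (\<Sum>k\<le>n. real (n choose k) * A (Suc k) x * B (n - k) x) + (\<Sum>j\<le>n. real (n choose j) * A j x * B (Suc (n - j)) x)"
    by (simp add: sum.distrib distrib_left mult.assoc)
  show ?thesis using h1 h2 h3 h4 h5 by linarith
qed

lemma leib_deriv:
  assumes A: "\<And>j. j \<le> n \<Longrightarrow> (A j has_real_derivative A (Suc j) x) (at x)"
      and B: "\<And>j. j \<le> n \<Longrightarrow> (B j has_real_derivative B (Suc j) x) (at x)"
  shows "(leib A B n has_real_derivative leib A B (Suc n) x) (at x)"
proof -
  have "((\<lambda>y. \<Sum>j\<le>n. real (n choose j) * A j y * B (n - j) y) has_real_derivative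
        (\<Sum>j\<le>n. real (n choose j) * (A (Suc j) x * B (n - j) x + A j x * B (Suc (n - j)) x))) (at x)"
  proof (rule DERIV_sum)
    fix j assume "j \<in> {..n}"
    then have j: "j \<le> n" by simp
    have a: "(A j has_real_derivative A (Suc j) x) (at x)" using A j by simp
    have b: "(B (n-j) has_real_derivative B (Suc (n-j)) x) (at x)" using B[of "n-j"] by simp
    show "((\<lambda>y. real (n choose j) * A j y * B (n - j) y) has_real_derivative
        real (n choose j) * (A (Suc j) x * B (n - j) x + A j x * B (Suc (n - j)) x)) (at x)"
      using DERIV_cmult[OF DERIV_mult[OF a b], of "real (n choose j)"]
      by (simp add: algebra_simps mult.assoc)
  qed
  then show ?thesis unfolding leib_Suc by (simp add: leib_def[abs_def])
qed

fun expseq :: "(nat \<Rightarrow> real \<Rightarrow> real) \<Rightarrow> nat \<Rightarrow> real \<Rightarrow> real" where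
  "expseq G 0 x = exp (G 0 x)"
| "expseq G (Suc n) x = (\<Sum>j\<le>n. real (n choose j) * G (Suc j) x * expseq G (n - j) x)"

lemma expseq_leib: "expseq G (Suc n) = leib (\<lambda>j. G (Suc j)) (expseq G) n"
  by (rule ext) (simp add: leib_def)

lemma expseq_deriv:
  assumes G: "\<And>k. (G k has_real_derivative G (Suc k) x) (at x)"
  shows "(expseq G n has_real_derivative expseq G (Suc n) x) (at x)"
proof (induction n rule: less_induct)
  case (less n)
  show ?case
  proof (cases n)
    case 0
    have "((\<lambda>y. exp (G 0 y)) has_real_derivative exp (G 0 x) * G (Suc 0) x) (at x)"
      by (rule DERIV_fun_exp[OF G])
    moreover have "expseq G 0 = (\<lambda>y. exp (G 0 y))" by (rule ext) simp
    ultimately show ?thesis using 0 by (simp add: mult.commute)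
  next
    case (Suc m)
    have "(leib (\<lambda>j. G (Suc j)) (expseq G) m has_real_derivative leib (\<lambda>j. G (Suc j)) (expseq G) (Suc m) x) (at x)"
    proof (rule leib_deriv)
      fix j assume "j \<le> m"
      show "(G (Suc j) has_real_derivative G (Suc (Suc j)) x) (at x)" by (rule G)
    next
      fix j assume "j \<le> m"
      then have "j < n" using Suc by simp
      then show "(expseq G j has_real_derivative expseq G (Suc j) x) (at x)" by (rule less)
    qed
    then show ?thesis using Suc by (simp only: expseq_leib)
  qed
qed

lemma expseq_sign:
  assumes G: "\<And>k. (-1)^k * G (Suc k) x \<le> 0"
  shows "(-1)^n * expseq G n x \<ge> 0"
proof (induction n rule: less_induct)
  case (less n)
  show ?case
  proof (cases n)
    case 0 then show ?thesis by simp
  next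
    case (Suc m)
    have "(-1)^n * expseq G n x = (\<Sum>j\<le>m. real (m choose j) * (- ((-1)^j * G (Suc j) x)) * ((-1)^(m-j) * expseq G (m - j) x))"
      unfolding Suc expseq.simps(2) sum_distrib_left
    proof (rule sum.cong[OF refl])
      fix j assume "j \<in> {..m}"
      then have "j + (m - j) = m" by simp
      then have "(-1::real)^j * (-1)^(m-j) = (-1)^m" by (metis power_add)
      then have e: "(-1::real)^(Suc m) = - ((-1)^j * (-1)^(m-j))" by simp
      show "(-1::real) ^ Suc m * (real (m choose j) * G (Suc j) x * expseq G (m - j) x) =
         real (m choose j) * - ((-1) ^ j * G (Suc j) x) * ((-1) ^ (m - j) * expseq G (m - j) x)"
        unfolding e by (simp only: mult_ac mult_minus_left mult_minus_right)
    qed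
    also have "\<dots> \<ge> 0"
    proof (rule sum_nonneg)
      fix j assume "j \<in> {..m}"
      then have "m - j < n" using Suc by auto
      then have h1: "(-1)^(m-j) * expseq G (m-j) x \<ge> 0" by (rule less)
      have h2: "- ((-1)^j * G (Suc j) x) \<ge> 0" using G[of j] by simp
      show "0 \<le> real (m choose j) * - ((- 1) ^ j * G (Suc j) x) * ((- 1) ^ (m - j) * expseq G (m - j) x)"
        by (rule mult_nonneg_nonneg[OF mult_nonneg_nonneg[OF _ h2] h1]) simp
    qed
    finally show ?thesis .
  qed
qed

lemma cm_cong:
  assumes "\<And>x. x \<in> I \<Longrightarrow> f x = g x"
  shows "completely_monotonic_on f I \<longleftrightarrow> completely_monotonic_on g I"
  unfolding completely_monotonic_on_def using assms by auto

lemma cm_exp: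
  assumes G: "\<And>x k. x \<in> I \<Longrightarrow> (G k has_real_derivative G (Suc k) x) (at x)"
      and S: "\<And>x k. x \<in> I \<Longrightarrow> (-1)^k * G (Suc k) x \<le> 0"
  shows "completely_monotonic_on (\<lambda>x. exp (G 0 x)) I"
  unfolding completely_monotonic_on_def
  by (rule exI[of _ "expseq G"]) (use G S expseq_deriv expseq_sign in auto)

lemma cm_exp_minus:
  assumes G: "\<And>x k. x \<in> I \<Longrightarrow> (G k has_real_derivative G (Suc k) x) (at x)"
      and S: "\<And>x k. x \<in> I \<Longrightarrow> (-1)^k * G (Suc k) x \<le> 0"
      and C: "\<And>x. x \<in> I \<Longrightarrow> G 0 x \<ge> c"
  shows "completely_monotonic_on (\<lambda>x. exp (G 0 x) - exp c) I"
  unfolding completely_monotonic_on_def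
proof (rule exI[of _ "\<lambda>k x. if k = 0 then exp (G 0 x) - exp c else expseq G k x"], intro conjI ballI allI)
  fix x assume x: "x \<in> I"
  fix k
  show "((\<lambda>x. if k = 0 then exp (G 0 x) - exp c else expseq G k x) has_real_derivative
      (if Suc k = 0 then exp (G 0 x) - exp c else expseq G (Suc k) x)) (at x)"
  proof (cases k)
    case 0
    have "((\<lambda>y. expseq G 0 y - exp c) has_real_derivative expseq G (Suc 0) x - 0) (at x)"
      by (intro DERIV_diff expseq_deriv DERIV_const) (use G x in auto)
    then show ?thesis using 0 by simp
  next
    case (Suc m)
    have "(expseq G k has_real_derivative expseq G (Suc k) x) (at x)"
      by (intro expseq_deriv) (use G x in auto)
    moreover have "(\<lambda>x. if k = 0 then exp (G 0 x) - exp c else expseq G k x) = expseq G k"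
      using Suc by auto
    ultimately show ?thesis by simp
  qed
next
  fix x k assume x: "x \<in> I"
  show "0 \<le> (-1) ^ k * (if k = 0 then exp (G 0 x) - exp c else expseq G k x)"
    using expseq_sign[of G x k] S[OF x] C[OF x] by auto
qed simp



fun Phi :: "real \<Rightarrow> real \<Rightarrow> nat \<Rightarrow> real \<Rightarrow> real" where
  "Phi a b 0 x = (x + b) * (ln (x + a) - ln x)"
| "Phi a b (Suc 0) x = ln (x + a) - ln x - b / x - (a - b) / (x + a)"
| "Phi a b (Suc (Suc n)) x = (-1)^n * fact n * (1 / (x + a)^(Suc n) - 1 / x^(Suc n))
     + (-1)^n * fact (Suc n) * (b / x^(Suc (Suc n)) + (a - b) / (x + a)^(Suc (Suc n)))"

lemma d_invpow:
  assumes "x + c \<noteq> 0"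
  shows "((\<lambda>y. 1 / (y + c)^m) has_real_derivative (- real m / (x + c)^(Suc m))) (at x)"
proof -
  have D: "((\<lambda>y. inverse ((y + c)^m)) has_real_derivative
      - (inverse ((x+c)^m) * (real m * (x + c)^(m - 1) * 1) * inverse ((x+c)^m))) (at x)"
  proof -
    have "((\<lambda>y. (y + c)^m) has_real_derivative real m * (x + c)^(m - 1) * 1) (at x)"
      by (auto intro!: derivative_eq_intros)
    from DERIV_inverse_fun[OF this] assms show ?thesis by (simp add: field_simps power2_eq_square)
  qed
  have E: "- (inverse ((x+c)^m) * (real m * (x + c)^(m - 1) * 1) * inverse ((x+c)^m)) = - real m / (x + c)^(Suc m)"
  proof (cases m)
    case 0 then show ?thesis by simp
  next
    case (Suc k)
    have zk: "(x + c)^k \<noteq> 0" using assms by simp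
    show ?thesis unfolding Suc using assms zk by (simp add: divide_simps power_Suc)
  qed
  have F: "(\<lambda>y. 1 / (y + c)^m) = (\<lambda>y. inverse ((y + c)^m))" by (simp add: inverse_eq_divide)
  show ?thesis unfolding F E[symmetric] by (rule D)
qed

lemma d_invpow0:
  assumes "x \<noteq> 0"
  shows "((\<lambda>y. 1 / y^m) has_real_derivative (- real m / x^(Suc m))) (at x)"
  using d_invpow[of x 0 m] assms by simp

lemma Phi_deriv:
  assumes x: "x > 0" "x + a > 0"
  shows "(Phi a b k has_real_derivative Phi a b (Suc k) x) (at x)"
proof (cases k)
  case 0
  have D: "((\<lambda>y. (y + b) * (ln (y + a) - ln y)) has_real_derivative
      1 * (ln (x + a) - ln x) + (x + b) * (1 / (x + a) * 1 - 1 / x)) (at x)"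
    using x by (auto intro!: derivative_eq_intros)
  have e: "(x + b) * (1 / (x + a) * 1 - 1 / x) = - b / x - (a - b) / (x + a)"
  proof -
    have 1: "(x + b) * (1 / (x + a)) = 1 + (b - a) / (x + a)" using x by (simp add: field_simps)
    have 2: "(x + b) * (1 / x) = 1 + b / x" using x by (simp add: field_simps)
    have 3: "(a - b) / (x + a) = - ((b - a) / (x + a))" by (simp add: minus_divide_left)
    show ?thesis using 1 2 3 by (simp add: right_diff_distrib)
  qed
  have eq: "1 * (ln (x + a) - ln x) + (x + b) * (1 / (x + a) * 1 - 1 / x) = Phi a b (Suc 0) x"
    unfolding e by simp
  have fn: "Phi a b 0 = (\<lambda>y. (y + b) * (ln (y + a) - ln y))" by (rule ext) simp
  show ?thesis unfolding 0 fn eq[symmetric] by (rule D)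
next
  case (Suc n)
  show ?thesis
  proof (cases n)
    case 0
    have "((\<lambda>y. ln (y + a) - ln y - b * (1 / y^1) - (a - b) * (1 / (y + a)^1)) has_real_derivative
      1 / (x + a) * 1 - 1 / x - b * (- real 1 / x^(Suc 1)) - (a - b) * (- real 1 / (x + a)^(Suc 1))) (at x)"
    proof -
      have l1: "((\<lambda>y. ln (y + a)) has_real_derivative 1 / (x + a) * 1) (at x)"
        using x by (auto intro!: derivative_eq_intros simp: field_simps)
      have l2: "((\<lambda>y. ln y) has_real_derivative 1 / x) (at x)"
        using x by (auto intro!: derivative_eq_intros simp: field_simps)
      show ?thesis
        by (intro DERIV_diff DERIV_cmult l1 l2 d_invpow[of x a 1] d_invpow0[of x 1]) (use x in auto)
    qed
    moreover have "Phi a b (Suc 0) = (\<lambda>y. ln (y + a) - ln y - b * (1 / y^1) - (a - b) * (1 / (y + a)^1))"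
      by (rule ext) simp
    moreover have "1 / (x + a) * 1 - 1 / x - b * (- real 1 / x^(Suc 1)) - (a - b) * (- real 1 / (x + a)^(Suc 1)) = Phi a b 2 x"
      by (simp add: numeral_2_eq_2)
    ultimately show ?thesis using Suc 0 by (simp add: numeral_2_eq_2 add.assoc)
  next
    case (Suc j)
    let ?c1 = "(-1::real)^j * fact j" and ?c2 = "(-1::real)^j * fact (Suc j)"
    have "((\<lambda>y. ?c1 * (1 / (y + a)^(Suc j) - 1 / y^(Suc j))
        + ?c2 * (b * (1 / y^(Suc (Suc j))) + (a - b) * (1 / (y + a)^(Suc (Suc j)))))
       has_real_derivative
        ?c1 * (- real (Suc j) / (x + a)^(Suc (Suc j)) - (- real (Suc j) / x^(Suc (Suc j))))
        + ?c2 * (b * (- real (Suc (Suc j)) / x^(Suc (Suc (Suc j)))) + (a - b) * (- real (Suc (Suc j)) / (x + a)^(Suc (Suc (Suc j)))))) (at x)"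
    proof -
      have d1: "((\<lambda>y. 1 / (y + a)^(Suc j)) has_real_derivative - real (Suc j) / (x + a)^(Suc (Suc j))) (at x)"
        by (rule d_invpow) (use x in auto)
      have d2: "((\<lambda>y. 1 / y^(Suc j)) has_real_derivative - real (Suc j) / x^(Suc (Suc j))) (at x)"
        by (rule d_invpow0) (use x in auto)
      have d3: "((\<lambda>y. 1 / y^(Suc (Suc j))) has_real_derivative - real (Suc (Suc j)) / x^(Suc (Suc (Suc j)))) (at x)"
        by (rule d_invpow0) (use x in auto)
      have d4: "((\<lambda>y. 1 / (y + a)^(Suc (Suc j))) has_real_derivative - real (Suc (Suc j)) / (x + a)^(Suc (Suc (Suc j)))) (at x)"
        by (rule d_invpow) (use x in auto)
      show ?thesis
        by (rule DERIV_add[OF DERIV_cmult[OF DERIV_diff[OF d1 d2]] DERIV_cmult[OF DERIV_add[OF DERIV_cmult[OF d3] DERIV_cmult[OF d4]]]])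
    qed
    moreover have "Phi a b (Suc (Suc j)) = (\<lambda>y. ?c1 * (1 / (y + a)^(Suc j) - 1 / y^(Suc j))
        + ?c2 * (b * (1 / y^(Suc (Suc j))) + (a - b) * (1 / (y + a)^(Suc (Suc j)))))"
      by (rule ext) simp
    moreover have "?c1 * (- real (Suc j) / (x + a)^(Suc (Suc j)) - (- real (Suc j) / x^(Suc (Suc j))))
        + ?c2 * (b * (- real (Suc (Suc j)) / x^(Suc (Suc (Suc j)))) + (a - b) * (- real (Suc (Suc j)) / (x + a)^(Suc (Suc (Suc j)))))
        = Phi a b (Suc (Suc (Suc j))) x"
      by (simp add: divide_inverse algebra_simps)
    ultimately show ?thesis using Suc \<open>k = Suc n\<close> by simp
  qed
qed

lemma incr_lim_le:
  fixes g g' :: "real \<Rightarrow> real"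
  assumes d: "\<And>y. y > c \<Longrightarrow> (g has_real_derivative g' y) (at y)"
      and p: "\<And>y. y > c \<Longrightarrow> g' y \<ge> 0"
      and l: "(g \<longlongrightarrow> L) at_top" and x: "x > c"
  shows "g x \<le> L"
proof -
  have "eventually (\<lambda>y. g x \<le> g y) at_top"
    using eventually_ge_at_top[of x]
  proof eventually_elim
    case (elim y)
    show ?case
      by (rule deriv_nonneg_imp_mono[of x y g g']) (use d p x elim in auto)
  qed
  then show ?thesis by (rule tendsto_lowerbound[OF l]) simp
qed

lemma decr_lim_ge:
  fixes g g' :: "real \<Rightarrow> real"
  assumes d: "\<And>y. y > c \<Longrightarrow> (g has_real_derivative g' y) (at y)"
      and p: "\<And>y. y > c \<Longrightarrow> g' y \<le> 0"
      and l: "(g \<longlongrightarrow> L) at_top" and x: "x > c"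
  shows "g x \<ge> L"
proof -
  have "eventually (\<lambda>y. g x \<ge> g y) at_top"
    using eventually_ge_at_top[of x]
  proof eventually_elim
    case (elim y)
    show ?case
      by (rule deriv_nonpos_imp_antimono[of x y g g']) (use d p x elim in auto)
  qed
  then show ?thesis by (rule tendsto_upperbound[OF l]) simp
qed



definition Ssum :: "nat \<Rightarrow> real \<Rightarrow> real \<Rightarrow> real" where
  "Ssum m p q = (\<Sum>i<m. p^(m-i) * q^(Suc i))"

lemma Ssum_id: "p * q * (q^m - p^m) = (q - p) * Ssum m p q"
proof -
  have "p * q * (q^m - p^m) = (q - p) * (p * q * (\<Sum>i<m. p^(m - Suc i) * q^i))"
    by (simp add: power_diff_sumr2)
  also have "p * q * (\<Sum>i<m. p^(m - Suc i) * q^i) = Ssum m p q"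
    unfolding Ssum_def sum_distrib_left
  proof (rule sum.cong[OF refl])
    fix i assume "i \<in> {..<m}"
    then have "m - i = Suc (m - Suc i)" by auto
    then show "p * q * (p ^ (m - Suc i) * q ^ i) = p ^ (m - i) * q ^ Suc i" by simp
  qed
  finally show ?thesis .
qed

lemma pair_ineq:
  fixes p q :: real assumes "0 \<le> p" "0 \<le> q"
  shows "p^j * q^k + p^k * q^j \<le> p^(j+k) + q^(j+k)"
proof -
  have "(p^j - q^j) * (p^k - q^k) \<ge> 0"
  proof (cases "p \<le> q")
    case True
    then have "p^j \<le> q^j" "p^k \<le> q^k" using assms by (auto intro: power_mono)
    then show ?thesis by (simp add: mult_nonpos_nonpos)
  next
    case False
    then have "q^j \<le> p^j" "q^k \<le> p^k" using assms by (auto intro: power_mono)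
    then show ?thesis by simp
  qed
  then show ?thesis by (simp add: algebra_simps power_add)
qed

lemma Ssum_pair:
  fixes p q :: real assumes "0 \<le> p" "0 \<le> q"
  shows "2 * Ssum m p q \<le> real m * (p^(Suc m) + q^(Suc m))"
proof -
  have rev: "Ssum m p q = (\<Sum>i<m. p^(Suc i) * q^(m - i))"
    unfolding Ssum_def
  proof (subst sum.nat_diff_reindex[symmetric], rule sum.cong[OF refl])
    fix i assume "i \<in> {..<m}"
    then have "m - (m - Suc i) = Suc i" "Suc (m - Suc i) = m - i" by auto
    then show "p ^ (m - (m - Suc i)) * q ^ Suc (m - Suc i) = p ^ Suc i * q ^ (m - i)" by simp
  qed
  have "2 * Ssum m p q = (\<Sum>i<m. p^(m-i) * q^(Suc i) + p^(Suc i) * q^(m - i))"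
    by (subst mult_2, subst (2) rev) (simp add: Ssum_def sum.distrib)
  also have "\<dots> \<le> (\<Sum>i<m. p^(Suc m) + q^(Suc m))"
  proof (rule sum_mono)
    fix i assume "i \<in> {..<m}"
    then have "m - i + Suc i = Suc m" by auto
    then show "p^(m-i) * q^(Suc i) + p^(Suc i) * q^(m - i) \<le> p^(Suc m) + q^(Suc m)"
      using pair_ineq[OF assms, of "m - i" "Suc i"] by simp
  qed
  also have "\<dots> = real m * (p^(Suc m) + q^(Suc m))" by simp
  finally show ?thesis .
qed

lemma Ssum_low1:
  fixes p q :: real assumes "0 \<le> p" "p \<le> q"
  shows "real m * p^(Suc m) \<le> Ssum m p q"
proof -
  have "real m * p^(Suc m) = (\<Sum>i<m. p^(m-i) * p^(Suc i))"
  proof -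
    have "(\<Sum>i<m. p^(m-i) * p^(Suc i)) = (\<Sum>i<m. p^(Suc m))"
    proof (rule sum.cong[OF refl])
      fix i assume "i \<in> {..<m}"
      then have "m - i + Suc i = Suc m" by auto
      then show "p^(m-i) * p^(Suc i) = p^(Suc m)" by (metis power_add)
    qed
    then show ?thesis by simp
  qed
  also have "\<dots> \<le> Ssum m p q"
    unfolding Ssum_def
    by (rule sum_mono, rule mult_left_mono, rule power_mono) (use assms in auto)
  finally show ?thesis .
qed

lemma Ssum_low2:
  fixes p q :: real assumes "0 \<le> q" "q \<le> p"
  shows "real m * q^(Suc m) \<le> Ssum m p q"
proof -
  have "real m * q^(Suc m) = (\<Sum>i<m. q^(m-i) * q^(Suc i))"
  proof -
    have "(\<Sum>i<m. q^(m-i) * q^(Suc i)) = (\<Sum>i<m. q^(Suc m))"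
    proof (rule sum.cong[OF refl])
      fix i assume "i \<in> {..<m}"
      then have "m - i + Suc i = Suc m" by auto
      then show "q^(m-i) * q^(Suc i) = q^(Suc m)" by (metis power_add)
    qed
    then show ?thesis by simp
  qed
  also have "\<dots> \<le> Ssum m p q"
    unfolding Ssum_def
    by (rule sum_mono, rule mult_right_mono, rule power_mono) (use assms in auto)
  finally show ?thesis .
qed

lemma K_alg: fixes p q A B F c b a :: real assumes "p \<noteq> 0" "q \<noteq> 0" "A \<noteq> 0" "B \<noteq> 0"
 shows "F*(1/B - 1/A) + c*F*(b/(p*A) + (a-b)/(q*B)) = F * (p*A*q - p*q*B + c*(b*(q*B - p*A) + a*(p*A))) / ((p*A)*(q*B))"
  using assms by (simp add: field_simps)

lemma eps_lemma: fixes e F G X Y :: real assumes h: "e*e = 1" shows "e*(e*F*X + e*G*Y) = F*X + G*Y"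
proof -
  have "e*(e*F*X + e*G*Y) = (e*e)*(F*X + G*Y)" by (simp add: algebra_simps)
  then show ?thesis using h by simp
qed

lemma Phi_K:
  assumes x: "x > 0" "x + a > 0"
  shows "(-1)^n * Phi a b (Suc (Suc n)) x =
    fact n * (- a * Ssum (Suc n) x (x + a) + real (Suc n) * (b * ((x+a)^(Suc (Suc n)) - x^(Suc (Suc n))) + a * x^(Suc (Suc n))))
      / (x^(Suc (Suc n)) * (x + a)^(Suc (Suc n)))"
proof -
  have m1: "(-1::real)^n * (-1)^n = 1" by (simp add: power_add[symmetric])
  have pS1: "x^(Suc(Suc n)) = x * x^(Suc n)" by (rule power_Suc)
  have pS2: "(x+a)^(Suc(Suc n)) = (x+a) * (x+a)^(Suc n)" by (rule power_Suc)
  have fS: "fact (Suc n) = real (Suc n) * (fact n :: real)" by (rule fact_Suc)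
  have e1: "(-1)^n * Phi a b (Suc (Suc n)) x = fact n * (1/(x+a)^(Suc n) - 1/x^(Suc n))
      + real (Suc n) * fact n * (b/(x*x^(Suc n)) + (a-b)/((x+a)*(x+a)^(Suc n)))"
    unfolding Phi.simps pS1 pS2 fS by (rule eps_lemma[OF m1])
  have e2: "fact n * (1/(x+a)^(Suc n) - 1/x^(Suc n))
      + real (Suc n) * fact n * (b/(x*x^(Suc n)) + (a-b)/((x+a)*(x+a)^(Suc n)))
    = fact n * (x*x^(Suc n)*(x+a) - x*(x+a)*(x+a)^(Suc n) + real (Suc n)*(b*((x+a)*(x+a)^(Suc n) - x*x^(Suc n)) + a*(x*x^(Suc n))))
       / ((x*x^(Suc n))*((x+a)*(x+a)^(Suc n)))"
    by (rule K_alg) (use x in auto)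
  have e3a: "x*x^(Suc n)*(x+a) - x*(x+a)*(x+a)^(Suc n) = - (x*(x+a)*((x+a)^(Suc n) - x^(Suc n)))"
    by (simp add: algebra_simps)
  have e3: "x*x^(Suc n)*(x+a) - x*(x+a)*(x+a)^(Suc n) = - a * Ssum (Suc n) x (x + a)"
    unfolding e3a Ssum_id by simp
  show ?thesis unfolding e1 e2 e3 pS1 pS2 ..
qed

lemma comb_A1:
  fixes M a b P1 Q1 S :: real
  assumes "M \<ge> 0" "Q1 \<ge> P1" "2 * b \<ge> a" "a \<ge> 0" "2 * S \<le> M * (P1 + Q1)"
  shows "0 \<le> - a * S + M * (b * (Q1 - P1) + a * P1)"
proof -
  have U: "M * ((b - a/2) * (Q1 - P1)) \<ge> 0" by (intro mult_nonneg_nonneg) (use assms in auto)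
  have V: "a * (M * (P1 + Q1) - 2 * S) \<ge> 0" by (intro mult_nonneg_nonneg) (use assms in auto)
  have "- a * S + M * (b * (Q1 - P1) + a * P1) = M * ((b - a/2) * (Q1 - P1)) + a * (M * (P1 + Q1) - 2 * S) / 2"
    by (simp add: field_simps)
  then show ?thesis using U V by simp
qed

lemma comb_A2:
  fixes M a b P1 Q1 S :: real
  assumes "M \<ge> 0" "Q1 \<le> P1" "b \<le> a" "a \<le> 0" "M * Q1 \<le> S"
  shows "0 \<le> - a * S + M * (b * (Q1 - P1) + a * P1)"
proof -
  have U: "M * ((a - b) * (P1 - Q1)) \<ge> 0" by (intro mult_nonneg_nonneg) (use assms in auto)
  have V: "(-a) * (S - M * Q1) \<ge> 0" by (intro mult_nonneg_nonneg) (use assms in auto)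
  have "- a * S + M * (b * (Q1 - P1) + a * P1) = M * ((a - b) * (P1 - Q1)) + (-a) * (S - M * Q1)"
    by (simp add: algebra_simps)
  then show ?thesis using U V by simp
qed

lemma comb_B1:
  fixes M a b P1 Q1 S :: real
  assumes "M \<ge> 0" "Q1 \<ge> P1" "b \<le> 0" "a \<ge> 0" "M * P1 \<le> S"
  shows "- a * S + M * (b * (Q1 - P1) + a * P1) \<le> 0"
proof -
  have U: "M * ((-b) * (Q1 - P1)) \<ge> 0" by (intro mult_nonneg_nonneg) (use assms in auto)
  have V: "a * (S - M * P1) \<ge> 0" by (intro mult_nonneg_nonneg) (use assms in auto)
  have "- a * S + M * (b * (Q1 - P1) + a * P1) = - (M * ((-b) * (Q1 - P1)) + a * (S - M * P1))"
    by (simp add: algebra_simps)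
  then show ?thesis using U V by simp
qed

lemma comb_B2:
  fixes M a b P1 Q1 S :: real
  assumes "M \<ge> 0" "Q1 \<le> P1" "2 * b \<ge> a" "a \<le> 0" "2 * S \<le> M * (P1 + Q1)"
  shows "- a * S + M * (b * (Q1 - P1) + a * P1) \<le> 0"
proof -
  have U: "M * ((b - a/2) * (P1 - Q1)) \<ge> 0" by (intro mult_nonneg_nonneg) (use assms in auto)
  have V: "(-a) * (M * (P1 + Q1) - 2 * S) \<ge> 0" by (intro mult_nonneg_nonneg) (use assms in auto)
  have "- a * S + M * (b * (Q1 - P1) + a * P1) = - (M * ((b - a/2) * (P1 - Q1)) + (-a) * (M * (P1 + Q1) - 2 * S) / 2)"
    by (simp add: field_simps)
  then show ?thesis using U V by simp
qed



lemma Phi0_fun: "Phi a b 0 = (\<lambda>x. (x + b) * (ln (x + a) - ln x))" by (rule ext) simp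
lemma Phi1_fun: "Phi a b (Suc 0) = (\<lambda>x. ln (x + a) - ln x - b / x - (a - b) / (x + a))" by (rule ext) simp

lemma Phi_lim0: "(Phi a b 0 \<longlongrightarrow> a) at_top"
  unfolding Phi0_fun by real_asymp
lemma Phi_lim1: "(Phi a b (Suc 0) \<longlongrightarrow> 0) at_top"
  unfolding Phi1_fun by real_asymp
lemma Phi_limx: "((\<lambda>x. x * (Phi a b 0 x - a)) \<longlongrightarrow> b * a - a * a / 2) at_top"
  unfolding Phi0_fun by real_asymp

definition condA :: "real \<Rightarrow> real \<Rightarrow> bool" where
  "condA a b \<longleftrightarrow> (a \<ge> 0 \<and> 2 * b \<ge> a) \<or> (a \<le> 0 \<and> b \<le> a)"
definition condB :: "real \<Rightarrow> real \<Rightarrow> bool" where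
  "condB a b \<longleftrightarrow> (a \<ge> 0 \<and> b \<le> 0) \<or> (a \<le> 0 \<and> 2 * b \<ge> a)"

lemma signA:
  assumes x: "x > 0" "x + a > 0" and c: "condA a b"
  shows "(-1)^n * Phi a b (Suc (Suc n)) x \<ge> 0"
proof -
  let ?P = "x^(Suc (Suc n))" and ?Q = "(x + a)^(Suc (Suc n))" and ?S = "Ssum (Suc n) x (x + a)"
  have N: "0 \<le> - a * ?S + real (Suc n) * (b * (?Q - ?P) + a * ?P)"
  proof (cases "a \<ge> 0 \<and> 2 * b \<ge> a")
    case True
    have "?P \<le> ?Q" using True x by (intro power_mono) auto
    moreover have "2 * ?S \<le> real (Suc n) * (?P + ?Q)" using Ssum_pair[of x "x + a" "Suc n"] x by simp
    ultimately show ?thesis by (intro comb_A1) (use True in auto)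
  next
    case False
    then have F: "a \<le> 0" "b \<le> a" using c unfolding condA_def by auto
    have "?Q \<le> ?P" using F x by (intro power_mono) auto
    moreover have "real (Suc n) * ?Q \<le> ?S" using Ssum_low2[of "x + a" x "Suc n"] x F by simp
    ultimately show ?thesis by (intro comb_A2) (use F in auto)
  qed
  have "0 \<le> fact n * (- a * ?S + real (Suc n) * (b * (?Q - ?P) + a * ?P)) / (?P * ?Q)"
    using N x by (intro divide_nonneg_pos mult_nonneg_nonneg) auto
  then show ?thesis unfolding Phi_K[OF x] .
qed

lemma signB:
  assumes x: "x > 0" "x + a > 0" and c: "condB a b"
  shows "(-1)^n * Phi a b (Suc (Suc n)) x \<le> 0"
proof -
  let ?P = "x^(Suc (Suc n))" and ?Q = "(x + a)^(Suc (Suc n))" and ?S = "Ssum (Suc n) x (x + a)"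
  have N: "- a * ?S + real (Suc n) * (b * (?Q - ?P) + a * ?P) \<le> 0"
  proof (cases "a \<ge> 0 \<and> b \<le> 0")
    case True
    have "?P \<le> ?Q" using True x by (intro power_mono) auto
    moreover have "real (Suc n) * ?P \<le> ?S" using Ssum_low1[of x "x + a" "Suc n"] x True by simp
    ultimately show ?thesis by (intro comb_B1) (use True in auto)
  next
    case False
    then have F: "a \<le> 0" "2 * b \<ge> a" using c unfolding condB_def by auto
    have "?Q \<le> ?P" using F x by (intro power_mono) auto
    moreover have "2 * ?S \<le> real (Suc n) * (?P + ?Q)" using Ssum_pair[of x "x + a" "Suc n"] x by simp
    ultimately show ?thesis by (intro comb_B2) (use F in auto)
  qed
  have "fact n * (- a * ?S + real (Suc n) * (b * (?Q - ?P) + a * ?P)) / (?P * ?Q) \<le> 0"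
    using N x by (intro divide_nonpos_pos mult_nonneg_nonpos) auto
  then show ?thesis unfolding Phi_K[OF x] .
qed

locale dom =
  fixes a c :: real
  assumes dom: "\<And>x. x > c \<Longrightarrow> x > 0 \<and> x + a > 0"
begin

lemma Phi1_A: assumes "condA a b" "x > c" shows "Phi a b (Suc 0) x \<le> 0"
proof (rule incr_lim_le[of c "Phi a b (Suc 0)" "Phi a b (Suc (Suc 0))" 0 x])
  fix y assume "y > c" then have y: "y > 0" "y + a > 0" using dom by auto
  show "(Phi a b (Suc 0) has_real_derivative Phi a b (Suc (Suc 0)) y) (at y)" by (rule Phi_deriv[OF y])
  show "Phi a b (Suc (Suc 0)) y \<ge> 0" using signA[OF y assms(1), of 0] by simp
qed (use Phi_lim1 assms in auto)

lemma Phi0_A: assumes "condA a b" "x > c" shows "Phi a b 0 x \<ge> a"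
proof (rule decr_lim_ge[of c "Phi a b 0" "Phi a b (Suc 0)" a x])
  fix y assume "y > c" then have y: "y > 0" "y + a > 0" using dom by auto
  show "(Phi a b 0 has_real_derivative Phi a b (Suc 0) y) (at y)" by (rule Phi_deriv[OF y])
  show "Phi a b (Suc 0) y \<le> 0" using Phi1_A[OF assms(1) \<open>y > c\<close>] .
qed (use Phi_lim0 assms in auto)

lemma Phi1_B: assumes "condB a b" "x > c" shows "Phi a b (Suc 0) x \<ge> 0"
proof (rule decr_lim_ge[of c "Phi a b (Suc 0)" "Phi a b (Suc (Suc 0))" 0 x])
  fix y assume "y > c" then have y: "y > 0" "y + a > 0" using dom by auto
  show "(Phi a b (Suc 0) has_real_derivative Phi a b (Suc (Suc 0)) y) (at y)" by (rule Phi_deriv[OF y])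
  show "Phi a b (Suc (Suc 0)) y \<le> 0" using signB[OF y assms(1), of 0] by simp
qed (use Phi_lim1 assms in auto)

lemma Phi0_B: assumes "condB a b" "x > c" shows "Phi a b 0 x \<le> a"
proof (rule incr_lim_le[of c "Phi a b 0" "Phi a b (Suc 0)" a x])
  fix y assume "y > c" then have y: "y > 0" "y + a > 0" using dom by auto
  show "(Phi a b 0 has_real_derivative Phi a b (Suc 0) y) (at y)" by (rule Phi_deriv[OF y])
  show "Phi a b (Suc 0) y \<ge> 0" using Phi1_B[OF assms(1) \<open>y > c\<close>] .
qed (use Phi_lim0 assms in auto)

lemma cmA: assumes "condA a b"
  shows "completely_monotonic_on (\<lambda>x. exp (Phi a b 0 x) - exp a) {c<..}"
proof (rule cm_exp_minus)
  fix x k assume "x \<in> {c<..}"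
  then have xc: "x > c" by simp
  then have y: "x > 0" "x + a > 0" using dom by auto
  show "(Phi a b k has_real_derivative Phi a b (Suc k) x) (at x)" by (rule Phi_deriv[OF y])
  show "(-1)^k * Phi a b (Suc k) x \<le> 0"
  proof (cases k)
    case 0 then show ?thesis using Phi1_A[OF assms xc] by simp
  next
    case (Suc n) then show ?thesis using signA[OF y assms, of n] by simp
  qed
next
  fix x assume "x \<in> {c<..}"
  then show "a \<le> Phi a b 0 x" using Phi0_A[OF assms] by simp
qed

lemma cmB_minus: assumes "condB a b"
  shows "completely_monotonic_on (\<lambda>x. exp (- Phi a b 0 x) - exp (- a)) {c<..}"
proof -
  have "completely_monotonic_on (\<lambda>x. exp ((\<lambda>k x. - Phi a b k x) 0 x) - exp (- a)) {c<..}"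
  proof (rule cm_exp_minus)
    fix x k assume "x \<in> {c<..}"
    then have xc: "x > c" by simp
    then have y: "x > 0" "x + a > 0" using dom by auto
    show "((\<lambda>x. - Phi a b k x) has_real_derivative - Phi a b (Suc k) x) (at x)"
      by (rule DERIV_minus[OF Phi_deriv[OF y]])
    show "(-1)^k * - Phi a b (Suc k) x \<le> 0"
    proof (cases k)
      case 0 then show ?thesis using Phi1_B[OF assms xc] by simp
    next
      case (Suc n) then show ?thesis using signB[OF y assms, of n] by (simp del: Phi.simps)
    qed
  next
    fix x assume "x \<in> {c<..}"
    then show "- a \<le> - Phi a b 0 x" using Phi0_B[OF assms] by simp
  qed
  then show ?thesis by simp
qed

lemma cmB: assumes "condB a b"
  shows "completely_monotonic_on (\<lambda>x. exp (- Phi a b 0 x)) {c<..}"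
proof -
  have "completely_monotonic_on (\<lambda>x. exp ((\<lambda>k x. - Phi a b k x) 0 x)) {c<..}"
  proof (rule cm_exp)
    fix x k assume "x \<in> {c<..}"
    then have xc: "x > c" by simp
    then have y: "x > 0" "x + a > 0" using dom by auto
    show "((\<lambda>x. - Phi a b k x) has_real_derivative - Phi a b (Suc k) x) (at x)"
      by (rule DERIV_minus[OF Phi_deriv[OF y]])
    show "(-1)^k * - Phi a b (Suc k) x \<le> 0"
    proof (cases k)
      case 0 then show ?thesis using Phi1_B[OF assms xc] by simp
    next
      case (Suc n) then show ?thesis using signB[OF y assms, of n] by (simp del: Phi.simps)
    qed
  qed
  then show ?thesis by simp
qed

end



lemma powr_Phi:
  assumes x: "x > 0" "x + a > 0"
  shows "(1 + a / x) powr (x + b) = exp (Phi a b 0 x)"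
    and "(1 + a / x) powr (-(x + b)) = exp (- Phi a b 0 x)"
    and "1 / F_ab a b x = exp (- Phi a b 0 x)"
proof -
  have e: "1 + a / x = (x + a) / x" using x by (simp add: field_simps)
  have pos: "1 + a / x > 0" unfolding e using x by simp
  have l: "ln (1 + a / x) = ln (x + a) - ln x" unfolding e using x by (simp add: ln_div)
  show 1: "(1 + a / x) powr (x + b) = exp (Phi a b 0 x)"
    using pos unfolding powr_def l by simp
  show "(1 + a / x) powr (-(x + b)) = exp (- Phi a b 0 x)"
    using pos unfolding powr_def l by (simp add: algebra_simps)
  show "1 / F_ab a b x = exp (- Phi a b 0 x)"
    unfolding F_ab_def 1 by (simp add: exp_minus inverse_eq_divide)
qed

lemma cm_nonneg: "completely_monotonic_on f I \<Longrightarrow> x \<in> I \<Longrightarrow> f x \<ge> 0"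
  unfolding completely_monotonic_on_def by (metis power_0 mult_1)

lemma ev_pos_contra:
  fixes g :: "real \<Rightarrow> real"
  assumes "(g \<longlongrightarrow> l) at_top" "l < 0" "\<And>x. x > (c::real) \<Longrightarrow> g x \<ge> 0"
  shows False
proof -
  have "eventually (\<lambda>x. g x < 0 \<and> x > c) at_top"
    using order_tendstoD(2)[OF assms(1,2)] eventually_gt_at_top[of c] by (rule eventually_conj)
  then obtain N where "\<forall>x\<ge>N. g x < 0 \<and> x > c" by (auto simp: eventually_at_top_linorder)
  then show False using assms(3)[of N] by force
qed

theorem theorem1p3:
  fixes \<alpha> \<beta> :: real
  shows "(\<alpha> > 0 \<longrightarrow>
           ((completely_monotonic_on (\<lambda>x. (1 + \<alpha> / x) powr (x + \<beta>) - exp \<alpha>) {0<..}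
               \<longleftrightarrow> \<alpha> \<le> 2 * \<beta>) \<and>
            (completely_monotonic_on (\<lambda>x. (1 + \<alpha> / x) powr (-(x + \<beta>)) - exp (-\<alpha>)) {0<..}
               \<longleftrightarrow> \<beta> \<le> 0))) \<and>
         (\<alpha> < 0 \<longrightarrow>
           ((completely_monotonic_on (\<lambda>x. (1 + \<alpha> / x) powr (x + \<beta>) - exp \<alpha>) {-\<alpha><..}
               \<longleftrightarrow> \<beta> \<le> \<alpha>) \<and>
            (completely_monotonic_on (\<lambda>x. 1 / F_ab \<alpha> \<beta> x) {-\<alpha><..}
               \<longleftrightarrow> 2 * \<beta> \<ge> \<alpha>)))"
proof (intro conjI impI)
  assume a: "\<alpha> > 0"
  interpret dom \<alpha> 0 by unfold_locales (use a in auto)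
  have dm: "\<And>x. x \<in> {0<..} \<Longrightarrow> x > 0 \<and> x + \<alpha> > 0" using a by auto
  have eq1: "completely_monotonic_on (\<lambda>x. (1 + \<alpha> / x) powr (x + \<beta>) - exp \<alpha>) {0<..}
     \<longleftrightarrow> completely_monotonic_on (\<lambda>x. exp (Phi \<alpha> \<beta> 0 x) - exp \<alpha>) {0<..}"
    by (rule cm_cong) (use dm powr_Phi in auto)
  have eq2: "completely_monotonic_on (\<lambda>x. (1 + \<alpha> / x) powr (-(x + \<beta>)) - exp (-\<alpha>)) {0<..}
     \<longleftrightarrow> completely_monotonic_on (\<lambda>x. exp (- Phi \<alpha> \<beta> 0 x) - exp (-\<alpha>)) {0<..}"
    by (rule cm_cong) (use dm powr_Phi in auto)
  show "completely_monotonic_on (\<lambda>x. (1 + \<alpha> / x) powr (x + \<beta>) - exp \<alpha>) {0<..}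
               \<longleftrightarrow> \<alpha> \<le> 2 * \<beta>"
    unfolding eq1
  proof
    assume "\<alpha> \<le> 2 * \<beta>"
    then show "completely_monotonic_on (\<lambda>x. exp (Phi \<alpha> \<beta> 0 x) - exp \<alpha>) {0<..}"
      using a by (intro cmA) (auto simp: condA_def)
  next
    assume cm: "completely_monotonic_on (\<lambda>x. exp (Phi \<alpha> \<beta> 0 x) - exp \<alpha>) {0<..}"
    show "\<alpha> \<le> 2 * \<beta>"
    proof (rule ccontr)
      assume "\<not> \<alpha> \<le> 2 * \<beta>"
      then have "2 * \<beta> < \<alpha>" by simp
      then have "2 * \<beta> * \<alpha> < \<alpha> * \<alpha>" by (rule mult_strict_right_mono) (use a in auto)
      then have l: "\<beta> * \<alpha> - \<alpha> * \<alpha> / 2 < 0" by simp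
      show False
      proof (rule ev_pos_contra[OF Phi_limx l, of 0])
        fix x :: real assume "x > 0"
        then have "exp (Phi \<alpha> \<beta> 0 x) - exp \<alpha> \<ge> 0" using cm_nonneg[OF cm] by simp
        then have "Phi \<alpha> \<beta> 0 x - \<alpha> \<ge> 0" by simp
        then show "0 \<le> x * (Phi \<alpha> \<beta> 0 x - \<alpha>)"
          using \<open>x > 0\<close> by simp
      qed
    qed
  qed
  show "completely_monotonic_on (\<lambda>x. (1 + \<alpha> / x) powr (-(x + \<beta>)) - exp (-\<alpha>)) {0<..}
               \<longleftrightarrow> \<beta> \<le> 0"
    unfolding eq2
  proof
    assume "\<beta> \<le> 0"
    then show "completely_monotonic_on (\<lambda>x. exp (- Phi \<alpha> \<beta> 0 x) - exp (-\<alpha>)) {0<..}"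
      using a by (intro cmB_minus) (auto simp: condB_def)
  next
    assume cm: "completely_monotonic_on (\<lambda>x. exp (- Phi \<alpha> \<beta> 0 x) - exp (-\<alpha>)) {0<..}"
    show "\<beta> \<le> 0"
    proof (rule ccontr)
      assume "\<not> \<beta> \<le> 0"
      then have b: "\<beta> > 0" by simp
      define x0 where "x0 = \<alpha> / exp (\<alpha> / \<beta>)"
      have x0: "x0 > 0" unfolding x0_def using a by simp
      have "exp (- Phi \<alpha> \<beta> 0 x0) - exp (-\<alpha>) \<ge> 0" using cm_nonneg[OF cm] x0 by simp
      then have le: "Phi \<alpha> \<beta> 0 x0 \<le> \<alpha>" by simp
      have "(x0 + \<alpha>) / x0 = 1 + exp (\<alpha> / \<beta>)" unfolding x0_def using a by (simp add: field_simps)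
      moreover have "ln (x0 + \<alpha>) - ln x0 = ln ((x0 + \<alpha>) / x0)"
        using x0 a by (simp add: ln_div)
      ultimately have L: "ln (x0 + \<alpha>) - ln x0 = ln (1 + exp (\<alpha> / \<beta>))" by simp
      have pp: "0 < 1 + exp (\<alpha> / \<beta>)" using exp_gt_zero[of "\<alpha> / \<beta>"] by linarith
      have "ln (1 + exp (\<alpha> / \<beta>)) > ln (exp (\<alpha> / \<beta>))" by (subst ln_less_cancel_iff) (use pp in auto)
      then have L2: "ln (1 + exp (\<alpha> / \<beta>)) > \<alpha> / \<beta>" by simp
      have "\<beta> * (\<alpha> / \<beta>) < (x0 + \<beta>) * ln (1 + exp (\<alpha> / \<beta>))"
        by (rule mult_strict_mono) (use b x0 L2 a in auto)
      then have "\<alpha> < Phi \<alpha> \<beta> 0 x0" using b L by simp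
      then show False using le by simp
    qed
  qed
next
  assume a: "\<alpha> < 0"
  interpret dom \<alpha> "-\<alpha>" by unfold_locales (use a in auto)
  have dm: "\<And>x. x \<in> {-\<alpha><..} \<Longrightarrow> x > 0 \<and> x + \<alpha> > 0" using a by auto
  have eq1: "completely_monotonic_on (\<lambda>x. (1 + \<alpha> / x) powr (x + \<beta>) - exp \<alpha>) {-\<alpha><..}
     \<longleftrightarrow> completely_monotonic_on (\<lambda>x. exp (Phi \<alpha> \<beta> 0 x) - exp \<alpha>) {-\<alpha><..}"
    by (rule cm_cong) (use dm powr_Phi in auto)
  have eq2: "completely_monotonic_on (\<lambda>x. 1 / F_ab \<alpha> \<beta> x) {-\<alpha><..}
     \<longleftrightarrow> completely_monotonic_on (\<lambda>x. exp (- Phi \<alpha> \<beta> 0 x)) {-\<alpha><..}"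
    by (rule cm_cong) (use dm powr_Phi in auto)
  show "completely_monotonic_on (\<lambda>x. (1 + \<alpha> / x) powr (x + \<beta>) - exp \<alpha>) {-\<alpha><..}
               \<longleftrightarrow> \<beta> \<le> \<alpha>"
    unfolding eq1
  proof
    assume "\<beta> \<le> \<alpha>"
    then show "completely_monotonic_on (\<lambda>x. exp (Phi \<alpha> \<beta> 0 x) - exp \<alpha>) {-\<alpha><..}"
      using a by (intro cmA) (auto simp: condA_def)
  next
    assume cm: "completely_monotonic_on (\<lambda>x. exp (Phi \<alpha> \<beta> 0 x) - exp \<alpha>) {-\<alpha><..}"
    show "\<beta> \<le> \<alpha>"
    proof (rule ccontr)
      assume "\<not> \<beta> \<le> \<alpha>"
      then have b: "\<beta> > \<alpha>" by simp
      define r where "r = exp (\<alpha> / (\<beta> - \<alpha>)) / 2"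
      have "\<alpha> / (\<beta> - \<alpha>) < 0" using a b by (simp add: divide_neg_pos)
      then have "exp (\<alpha> / (\<beta> - \<alpha>)) < exp 0" by (subst exp_less_cancel_iff)
      then have ex: "exp (\<alpha> / (\<beta> - \<alpha>)) < 1" by simp
      have r0: "r > 0" "r < 1" "r < exp (\<alpha> / (\<beta> - \<alpha>))"
        using ex exp_gt_zero[of "\<alpha> / (\<beta> - \<alpha>)"] unfolding r_def by linarith+
      define x0 where "x0 = - \<alpha> / (1 - r)"
      have x0: "x0 > -\<alpha>" unfolding x0_def using r0 a by (simp add: field_simps mult_neg_pos)
      have x0a: "x0 + \<alpha> = r * x0" unfolding x0_def using r0 by (simp add: field_simps)
      have x0p: "x0 > 0" using x0 a by simp
      have "exp (Phi \<alpha> \<beta> 0 x0) - exp \<alpha> \<ge> 0" using cm_nonneg[OF cm] x0 by simp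
      then have ge: "Phi \<alpha> \<beta> 0 x0 \<ge> \<alpha>" by simp
      have L: "ln (x0 + \<alpha>) - ln x0 = ln r" unfolding x0a using r0 x0p by (simp add: ln_mult)
      have "ln r < ln (exp (\<alpha> / (\<beta> - \<alpha>)))" using r0 by (subst ln_less_cancel_iff) auto
      then have lr: "ln r < \<alpha> / (\<beta> - \<alpha>)" by simp
      have lr0: "ln r < 0" using r0 by simp
      have "(x0 + \<beta>) * ln r \<le> (\<beta> - \<alpha>) * ln r"
        by (rule mult_right_mono_neg) (use x0 lr0 in auto)
      also have "\<dots> < (\<beta> - \<alpha>) * (\<alpha> / (\<beta> - \<alpha>))"
        by (rule mult_strict_left_mono) (use lr b in auto)
      also have "\<dots> = \<alpha>" using b by simp
      finally have "Phi \<alpha> \<beta> 0 x0 < \<alpha>" using L by simp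
      then show False using ge by simp
    qed
  qed
  show "completely_monotonic_on (\<lambda>x. 1 / F_ab \<alpha> \<beta> x) {-\<alpha><..} \<longleftrightarrow> 2 * \<beta> \<ge> \<alpha>"
    unfolding eq2
  proof
    assume "2 * \<beta> \<ge> \<alpha>"
    then show "completely_monotonic_on (\<lambda>x. exp (- Phi \<alpha> \<beta> 0 x)) {-\<alpha><..}"
      using a by (intro cmB) (auto simp: condB_def)
  next
    assume cm: "completely_monotonic_on (\<lambda>x. exp (- Phi \<alpha> \<beta> 0 x)) {-\<alpha><..}"
    then obtain D where D0: "\<forall>x\<in>{-\<alpha><..}. D 0 x = exp (- Phi \<alpha> \<beta> 0 x)"
      and Dd: "\<forall>k. \<forall>x\<in>{-\<alpha><..}. (D k has_real_derivative D (Suc k) x) (at x)"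
      and Ds: "\<forall>k. \<forall>x\<in>{-\<alpha><..}. (-1) ^ k * D k x \<ge> 0"
      unfolding completely_monotonic_on_def by blast
    have lim: "(D 0 \<longlongrightarrow> exp (- \<alpha>)) at_top"
    proof -
      have "((\<lambda>x. exp (- Phi \<alpha> \<beta> 0 x)) \<longlongrightarrow> exp (- \<alpha>)) at_top"
        by (intro tendsto_intros Phi_lim0)
      moreover have "eventually (\<lambda>x. exp (- Phi \<alpha> \<beta> 0 x) = D 0 x) at_top"
        using eventually_gt_at_top[of "-\<alpha>"] by eventually_elim (use D0 in auto)
      ultimately show ?thesis by (rule Lim_transform_eventually)
    qed
    have le: "Phi \<alpha> \<beta> 0 x \<le> \<alpha>" if "x > -\<alpha>" for x
    proof -
      have "D 0 x \<ge> exp (- \<alpha>)"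
      proof (rule decr_lim_ge[of "-\<alpha>" "D 0" "D 1" "exp (-\<alpha>)" x])
        fix y assume "y > -\<alpha>"
        then show "(D 0 has_real_derivative D 1 y) (at y)" using Dd by auto
        have "(-1)^1 * D 1 y \<ge> 0" using Ds \<open>y > -\<alpha>\<close> by blast
        then show "D 1 y \<le> 0" by simp
      qed (use lim that in auto)
      then show ?thesis using D0 that by simp
    qed
    show "2 * \<beta> \<ge> \<alpha>"
    proof (rule ccontr)
      assume "\<not> 2 * \<beta> \<ge> \<alpha>"
      then have "2 * \<beta> < \<alpha>" by simp
      then have "\<alpha> * \<alpha> < 2 * \<beta> * \<alpha>" by (rule mult_strict_right_mono_neg) (use a in auto)
      then have "\<beta> * \<alpha> - \<alpha> * \<alpha> / 2 > 0" by simp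
      then have l: "- (\<beta> * \<alpha> - \<alpha> * \<alpha> / 2) < 0" by simp
      show False
      proof (rule ev_pos_contra[OF tendsto_minus[OF Phi_limx] l, of "-\<alpha>"])
        fix x :: real assume "x > -\<alpha>"
        then have "Phi \<alpha> \<beta> 0 x - \<alpha> \<le> 0" "x > 0" using le a by auto
        then show "0 \<le> - (x * (Phi \<alpha> \<beta> 0 x - \<alpha>))" by (simp add: mult_nonneg_nonpos)
      qed
    qed
  qed
qed

end
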